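(* Let $p=(z_0,\tau_0,0)\in\mathcal{C}$. Then $\mathcal{H}(p)\cap\mathcal{C}=\{p\}$ if and only if $\tau_0=0$ (i.e. $p\in\mathcal{E}$), and in that case $\mathcal{H}(p)$ is tangent to $\mathcal{C}$ at $p$ (the derivative $dY/dz$ along $\mathcal{H}(p)$ vanishes at $z=z_0$). If $\tau_0\neq 0$, then $\mathcal{H}(p)\cap\mathcal{C}$ consists of exactly two points, namely $p$ and the point with $z$-coordinate $z_1=-\dfrac{\tau_0(1+z_0^2)-z_0}{\tau_0z_0(1+z_0^2)+1}$ (interpreted at $z=\infty$ if the denominator vanishes), and $\mathcal{H}(p)$ crosses $\mathcal{C}$ transversally at $p$, with $dY/dz=-2c\tau_0(1+z_0^2)/[1+(b_1-1)z_0^2]$ there.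
   Context: Fix real constants $a_1,a_2,a_3,a_4$ and $b_1>1$, and put $c=a_3-a_2$, assumed $>0$. Flux $F=(f,g)$, $f(u,v)=(b_1+1)u^2/2+v^2/2+a_1u+a_2v$, $g(u,v)=uv+a_3u+a_4v$. Coordinates $(z,\tau,Y)\in\mathbb{R}^3$. Define $\widetilde U(z,\tau)=\frac{2cz}{z^2+1}+c\tau(z^2-1)$, $V_1(z,\tau)=\frac{c}{z^2+1}+c\tau z$, $U=(\widetilde U-a_1+a_4)/b_1$, $V=V_1-a_3$. The point $(z,\tau,Y)$ has left state $W=(U+zY/2,\,V+Y/2)$ and right state $W'=(U-zY/2,\,V-Y/2)$. For $p\in\mathbb{R}^3$, $\mathcal{H}(p)=\{q: W(q)=W(p)\}$; it is the graph over $z\in\mathbb{R}$ of a smooth map $z\mapsto(\tau(z),Y(z))$. The characteristic plane is $\mathcal{C}=\{Y=0\}$ and the coincidence curve is $\mathcal{E}=\{Y=0,\tau=0\}$. *)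

theory Defs
  imports "HOL-Analysis.Analysis"
begin

definition cpar :: "real \<Rightarrow> real \<Rightarrow> real" where
  "cpar a2 a3 = a3 - a2"

definition Utilde :: "real \<Rightarrow> real \<Rightarrow> real \<Rightarrow> real" where
  "Utilde c z \<tau> = 2 * c * z / (z\<^sup>2 + 1) + c * \<tau> * (z\<^sup>2 - 1)"

definition V1 :: "real \<Rightarrow> real \<Rightarrow> real \<Rightarrow> real" where
  "V1 c z \<tau> = c / (z\<^sup>2 + 1) + c * \<tau> * z"

definition Uf :: "real \<Rightarrow> real \<Rightarrow> real \<Rightarrow> real \<Rightarrow> real \<Rightarrow> real \<Rightarrow> real \<Rightarrow> real" where
  "Uf a1 a2 a3 a4 b1 z \<tau> = (Utilde (cpar a2 a3) z \<tau> - a1 + a4) / b1"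

definition Vf :: "real \<Rightarrow> real \<Rightarrow> real \<Rightarrow> real \<Rightarrow> real" where
  "Vf a2 a3 z \<tau> = V1 (cpar a2 a3) z \<tau> - a3"

definition leftState ::
  "real \<Rightarrow> real \<Rightarrow> real \<Rightarrow> real \<Rightarrow> real \<Rightarrow> real \<times> real \<times> real \<Rightarrow> real \<times> real" where
  "leftState a1 a2 a3 a4 b1 q = (case q of (z, \<tau>, Y) \<Rightarrow>
      (Uf a1 a2 a3 a4 b1 z \<tau> + z * Y / 2, Vf a2 a3 z \<tau> + Y / 2))"

definition rightState ::
  "real \<Rightarrow> real \<Rightarrow> real \<Rightarrow> real \<Rightarrow> real \<Rightarrow> real \<times> real \<times> real \<Rightarrow> real \<times> real" where
  "rightState a1 a2 a3 a4 b1 q = (case q of (z, \<tau>, Y) \<Rightarrow>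
      (Uf a1 a2 a3 a4 b1 z \<tau> - z * Y / 2, Vf a2 a3 z \<tau> - Y / 2))"

definition Hset ::
  "real \<Rightarrow> real \<Rightarrow> real \<Rightarrow> real \<Rightarrow> real \<Rightarrow> real \<times> real \<times> real \<Rightarrow> (real \<times> real \<times> real) set" where
  "Hset a1 a2 a3 a4 b1 p = {q. leftState a1 a2 a3 a4 b1 q = leftState a1 a2 a3 a4 b1 p}"

definition charPlane :: "(real \<times> real \<times> real) set" where
  "charPlane = {(z, \<tau>, Y). Y = 0}"

definition coincCurve :: "(real \<times> real \<times> real) set" where
  "coincCurve = {(z, \<tau>, Y). Y = 0 \<and> \<tau> = 0}"

end

theory Submission
  imports Defs
begin

definition uu :: "real \<Rightarrow> real \<Rightarrow> real" where "uu z t = 2*z/(z\<^sup>2+1) + t*(z\<^sup>2-1)"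
definition vv :: "real \<Rightarrow> real \<Rightarrow> real" where "vv z t = 1/(z\<^sup>2+1) + t*z"
definition TF :: "real \<Rightarrow> real \<Rightarrow> real \<Rightarrow> real \<Rightarrow> real" where
  "TF b1 z0 t0 z = ((2-b1)*z/(z\<^sup>2+1) + b1*z* vv z0 t0 - uu z0 t0)/(1+(b1-1)*z\<^sup>2)"
definition YF :: "real \<Rightarrow> real \<Rightarrow> real \<Rightarrow> real \<Rightarrow> real \<Rightarrow> real" where
  "YF c b1 z0 t0 z = -2*c*(vv z0 t0 * z\<^sup>2 - uu z0 t0 * z + 1 - vv z0 t0)/(1+(b1-1)*z\<^sup>2)"

lemma sq1: "(z::real)\<^sup>2 + 1 \<noteq> 0" by (smt (verit) zero_le_power2)
lemma dpos: "(b1::real) > 1 \<Longrightarrow> 1 + (b1-1)*z\<^sup>2 > 0"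
  by (smt (verit) mult_nonneg_nonneg zero_le_power2)

lemma YF_eq:
  assumes b: "(b1::real) > 1"
  shows "2*c*(vv z0 t0 - vv z (TF b1 z0 t0 z)) = YF c b1 z0 t0 z"
proof -
  define r where "r = 1/(z\<^sup>2+1)"
  define v0 where "v0 = vv z0 t0"
  define u0 where "u0 = uu z0 t0"
  define Dn where "Dn = 1+(b1-1)*z\<^sup>2"
  define N where "N = (2-b1)*z*r + b1*z* v0 - u0"
  have Dn0: "Dn \<noteq> 0" using dpos[OF b, of z] Dn_def by simp
  have r1: "r*(z\<^sup>2+1) = 1" unfolding r_def using sq1[of z] by simp
  have T: "TF b1 z0 t0 z = N/Dn" unfolding TF_def N_def Dn_def r_def v0_def u0_def by simp
  have vz: "vv z (N/Dn) = r + z*N/Dn" unfolding vv_def r_def by simp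
  have ring: "(v0 - r)*Dn - z*N = -(v0*z\<^sup>2 - u0*z + 1 - v0) + (1 - r*(z\<^sup>2+1))"
    unfolding Dn_def N_def by (simp add: algebra_simps power2_eq_square)
  have "(v0 - r)*Dn - z*N = -(v0*z\<^sup>2 - u0*z + 1 - v0)" using ring r1 by simp
  then have "v0 - r - z*N/Dn = -(v0*z\<^sup>2 - u0*z + 1 - v0)/Dn"
    using Dn0 by (simp add: field_simps)
  then have E: "v0 - (r + z*N/Dn) = -(v0*z\<^sup>2 - u0*z + 1 - v0)/Dn" by simp
  have "YF c b1 z0 t0 z = 2*c*(-(v0*z\<^sup>2 - u0*z + 1 - v0)/Dn)"
    unfolding YF_def v0_def[symmetric] u0_def[symmetric] Dn_def[symmetric] by (simp add: minus_divide_left algebra_simps)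
  then show ?thesis unfolding T vz v0_def[symmetric] E by simp
qed

lemma H_char:
  assumes b: "b1 > 1" and c: "a3 - a2 > 0"
  shows "(z,t,Y) \<in> Hset a1 a2 a3 a4 b1 (z0,t0,0) \<longleftrightarrow> t = TF b1 z0 t0 z \<and> Y = YF (a3-a2) b1 z0 t0 z"
proof -
  define c where "c = a3 - a2"
  have c0: "c > 0" using c c_def by simp
  have Ut: "Utilde c z t = c * uu z t" for z t unfolding Utilde_def uu_def by (simp add: field_simps)
  have Vt: "V1 c z t = c * vv z t" for z t unfolding V1_def vv_def by (simp add: field_simps)
  have b0: "b1 \<noteq> 0" using b by simp
  have "(z,t,Y) \<in> Hset a1 a2 a3 a4 b1 (z0,t0,0) \<longleftrightarrow>
     (c*uu z t + b1*z*Y/2 = c*uu z0 t0) \<and> (Y = 2*c*(vv z0 t0 - vv z t))"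
    unfolding Hset_def leftState_def Uf_def Vf_def cpar_def c_def[symmetric] Ut Vt
    using b0 by (auto simp: field_simps)
  also have "\<dots> \<longleftrightarrow> (uu z t + b1*z*(vv z0 t0 - vv z t) = uu z0 t0) \<and> (Y = 2*c*(vv z0 t0 - vv z t))"
  proof (cases "Y = 2*c*(vv z0 t0 - vv z t)")
    case True
    have "c*uu z t + b1*z*Y/2 = c*(uu z t + b1*z*(vv z0 t0 - vv z t))" by (simp add: True field_simps)
    then show ?thesis using c0 True by auto
  qed auto
  also have "uu z t + b1*z*(vv z0 t0 - vv z t) = (2-b1)*z/(z\<^sup>2+1) - t*(1+(b1-1)*z\<^sup>2) + b1*z* vv z0 t0"
  proof -
    have "z * vv z t = z/(z\<^sup>2+1) + t*z\<^sup>2" unfolding vv_def by (simp add: algebra_simps power2_eq_square)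
    then have "b1*z*(vv z0 t0 - vv z t) = b1*z* vv z0 t0 - b1*(z/(z\<^sup>2+1)) - b1*t*z\<^sup>2"
      by (simp add: algebra_simps)
    then show ?thesis unfolding uu_def[of z t] by (simp add: algebra_simps diff_divide_distrib)
  qed
  also have "((2-b1)*z/(z\<^sup>2+1) - t*(1+(b1-1)*z\<^sup>2) + b1*z* vv z0 t0 = uu z0 t0) \<longleftrightarrow> t = TF b1 z0 t0 z"
    unfolding TF_def using dpos[OF b, of z] by (auto simp: field_simps)
  also have "t = TF b1 z0 t0 z \<and> Y = 2*c*(vv z0 t0 - vv z t) \<longleftrightarrow> t = TF b1 z0 t0 z \<and> Y = YF c b1 z0 t0 z"
  proof -
    have "2*c*(vv z0 t0 - vv z (TF b1 z0 t0 z)) = YF c b1 z0 t0 z"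
      by (rule YF_eq[OF b])
    then show ?thesis by auto
  qed
  finally show ?thesis unfolding c_def .
qed

lemma Q_fact:
  fixes z z0 t0 :: real
  shows "(1+z0\<^sup>2)*(vv z0 t0 * z\<^sup>2 - uu z0 t0 * z + 1 - vv z0 t0)
     = (z - z0)*((t0*z0*(1+z0\<^sup>2)+1)*z - (-(t0*(1+z0\<^sup>2) - z0)))"
proof -
  define r where "r = 1/(z0\<^sup>2+1)"
  have r1: "r*(z0\<^sup>2+1) = 1" unfolding r_def using sq1[of z0] by simp
  have v: "vv z0 t0 = r + t0*z0" unfolding vv_def r_def by simp
  have u: "uu z0 t0 = 2*z0*r + t0*(z0\<^sup>2-1)" unfolding uu_def r_def by simp
  have "(1+z0\<^sup>2)*((r + t0*z0) * z\<^sup>2 - (2*z0*r + t0*(z0\<^sup>2-1)) * z + 1 - (r + t0*z0))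
     = (z - z0)*((t0*z0*(1+z0\<^sup>2)+1)*z - (-(t0*(1+z0\<^sup>2) - z0)))
       + (r*(z0\<^sup>2+1) - 1)*(z\<^sup>2 - 2*z0*z - 1)"
    by (simp add: algebra_simps power2_eq_square)
  then show ?thesis unfolding v u using r1 by simp
qed

lemma slope:
  fixes z0 t0 :: real
  shows "2 * vv z0 t0 * z0 - uu z0 t0 = t0*(1+z0\<^sup>2)"
proof -
  define r where "r = 1/(z0\<^sup>2+1)"
  have v: "vv z0 t0 = r + t0*z0" unfolding vv_def r_def by simp
  have u: "uu z0 t0 = 2*z0*r + t0*(z0\<^sup>2-1)" unfolding uu_def r_def by simp
  show ?thesis unfolding u v by (simp add: algebra_simps power2_eq_square)
qed

lemma YF_deriv:
  assumes b: "(b1::real) > 1"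
  shows "(YF c b1 z0 t0 has_real_derivative (- 2 * c * t0 * (1 + z0\<^sup>2) / (1 + (b1 - 1) * z0\<^sup>2))) (at z0)"
proof -
  define v0 where "v0 = vv z0 t0"
  define u0 where "u0 = uu z0 t0"
  define Dn where "Dn = 1 + (b1 - 1) * z0\<^sup>2"
  have Dn0: "Dn \<noteq> 0" using dpos[OF b, of z0] Dn_def by simp
  have Q0: "v0*z0\<^sup>2 - u0*z0 + 1 - v0 = 0"
    using Q_fact[of z0 t0 z0] sq1[of z0] unfolding v0_def u0_def by (simp add: add.commute)
  have sl: "2* v0*z0 - u0 = t0*(1+z0\<^sup>2)" using slope unfolding v0_def u0_def by simp
  have YFe: "YF c b1 z0 t0 = (\<lambda>z. -2*c*(v0*z\<^sup>2 - u0*z + 1 - v0)/(1+(b1-1)*z\<^sup>2))"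
    unfolding YF_def v0_def u0_def by simp
  have "((\<lambda>z. -2*c*(v0*z\<^sup>2 - u0*z + 1 - v0)/(1+(b1-1)*z\<^sup>2)) has_real_derivative
        (-2*c*((2* v0*z0 - u0)*Dn - (v0*z0\<^sup>2 - u0*z0 + 1 - v0)*(2*(b1-1)*z0))/(Dn*Dn))) (at z0)"
    using Dn0 unfolding Dn_def
    by (auto intro!: derivative_eq_intros simp: field_simps power2_eq_square)
  then have "((\<lambda>z. -2*c*(v0*z\<^sup>2 - u0*z + 1 - v0)/(1+(b1-1)*z\<^sup>2)) has_real_derivative
        (-2*c*(t0*(1+z0\<^sup>2)*Dn - 0*(2*(b1-1)*z0))/(Dn*Dn))) (at z0)"
    unfolding Q0 sl .
  moreover have "(-2*c*(t0*(1+z0\<^sup>2)*Dn - 0*(2*(b1-1)*z0))/(Dn*Dn))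
      = - 2 * c * t0 * (1 + z0\<^sup>2) / (1 + (b1 - 1) * z0\<^sup>2)"
    using Dn0 unfolding Dn_def[symmetric] by (simp add: field_simps)
  ultimately show ?thesis unfolding YFe by simp
qed


lemma HC_char:
  assumes b: "b1 > 1" and c: "a3 - a2 > 0"
  shows "(z,t,Y) \<in> Hset a1 a2 a3 a4 b1 (z0,t0,0) \<inter> charPlane \<longleftrightarrow>
     Y = 0 \<and> t = TF b1 z0 t0 z \<and> (z = z0 \<or> (t0*z0*(1+z0\<^sup>2)+1)*z = -(t0*(1+z0\<^sup>2) - z0))"
proof -
  have Dp: "1+(b1-1)*z\<^sup>2 > 0" using dpos[OF b] .
  have p: "1+z0\<^sup>2 > 0" by (smt (verit) zero_le_power2)
  have "YF (a3-a2) b1 z0 t0 z = 0 \<longleftrightarrow> vv z0 t0 * z\<^sup>2 - uu z0 t0 * z + 1 - vv z0 t0 = 0"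
    unfolding YF_def using Dp c by auto
  also have "\<dots> \<longleftrightarrow> (z - z0)*((t0*z0*(1+z0\<^sup>2)+1)*z - (-(t0*(1+z0\<^sup>2) - z0))) = 0"
    using Q_fact[of z0 t0 z] p by (metis mult_eq_0_iff less_irrefl)
  also have "\<dots> \<longleftrightarrow> (z = z0 \<or> (t0*z0*(1+z0\<^sup>2)+1)*z = -(t0*(1+z0\<^sup>2) - z0))" by simp
  finally have YE: "YF (a3-a2) b1 z0 t0 z = 0 \<longleftrightarrow> (z = z0 \<or> (t0*z0*(1+z0\<^sup>2)+1)*z = -(t0*(1+z0\<^sup>2) - z0))" .
  show ?thesis using H_char[OF b c, of z t Y a1 a4 z0 t0] YE unfolding charPlane_def by auto
qed

theorem mainTheorem2:
  fixes a1 a2 a3 a4 b1 z0 \<tau>0 :: real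
  assumes "b1 > 1" and "a3 - a2 > 0"
  shows
   "(Hset a1 a2 a3 a4 b1 (z0, \<tau>0, 0) \<inter> charPlane = {(z0, \<tau>0, 0)}
       \<and> \<tau>0 * z0 * (1 + z0\<^sup>2) + 1 \<noteq> 0
      \<longleftrightarrow> (z0, \<tau>0, 0) \<in> coincCurve)
    \<and> ((z0, \<tau>0, 0) \<in> coincCurve \<longleftrightarrow> \<tau>0 = 0)
    \<and> (\<tau>0 = 0 \<longrightarrow>
        Hset a1 a2 a3 a4 b1 (z0, \<tau>0, 0) \<inter> charPlane = {(z0, \<tau>0, 0)}
        \<and> (\<exists>\<tau>f Yf. Hset a1 a2 a3 a4 b1 (z0, \<tau>0, 0) = range (\<lambda>z. (z, \<tau>f z, Yf z))
               \<and> (Yf has_real_derivative 0) (at z0)))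
    \<and> (\<tau>0 \<noteq> 0 \<longrightarrow>
        (\<tau>0 * z0 * (1 + z0\<^sup>2) + 1 \<noteq> 0 \<longrightarrow>
           (\<exists>\<tau>1. Hset a1 a2 a3 a4 b1 (z0, \<tau>0, 0) \<inter> charPlane
                    = {(z0, \<tau>0, 0),
                       (- (\<tau>0 * (1 + z0\<^sup>2) - z0) / (\<tau>0 * z0 * (1 + z0\<^sup>2) + 1), \<tau>1, 0)}
                 \<and> - (\<tau>0 * (1 + z0\<^sup>2) - z0) / (\<tau>0 * z0 * (1 + z0\<^sup>2) + 1) \<noteq> z0))
        \<and> (\<tau>0 * z0 * (1 + z0\<^sup>2) + 1 = 0 \<longrightarrow>
           Hset a1 a2 a3 a4 b1 (z0, \<tau>0, 0) \<inter> charPlane = {(z0, \<tau>0, 0)})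
        \<and> (\<exists>\<tau>f Yf. Hset a1 a2 a3 a4 b1 (z0, \<tau>0, 0) = range (\<lambda>z. (z, \<tau>f z, Yf z))
               \<and> (Yf has_real_derivative
                    (- 2 * (a3 - a2) * \<tau>0 * (1 + z0\<^sup>2) / (1 + (b1 - 1) * z0\<^sup>2))) (at z0)))"
proof -
  define D where "D = \<tau>0 * z0 * (1 + z0\<^sup>2) + 1"
  define N where "N = - (\<tau>0 * (1 + z0\<^sup>2) - z0)"
  define H where "H = Hset a1 a2 a3 a4 b1 (z0, \<tau>0, 0)"
  note b = assms(1) and c = assms(2)
  have p: "1+z0\<^sup>2 > 0" by (smt (verit) zero_le_power2)
  have Tz0: "TF b1 z0 \<tau>0 z0 = \<tau>0"
    using H_char[OF b c, of z0 \<tau>0 0 a1 a4 z0 \<tau>0] unfolding Hset_def by simp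
  have HC: "q \<in> H \<inter> charPlane \<longleftrightarrow> (\<exists>z. q = (z, TF b1 z0 \<tau>0 z, 0) \<and> (z = z0 \<or> D*z = N))" for q
    using HC_char[OF b c] unfolding H_def D_def N_def by (cases q) auto
  have Hr: "H = range (\<lambda>z. (z, TF b1 z0 \<tau>0 z, YF (a3-a2) b1 z0 \<tau>0 z))"
    using H_char[OF b c] unfolding H_def by auto
  have der: "(YF (a3-a2) b1 z0 \<tau>0 has_real_derivative
      (- 2 * (a3 - a2) * \<tau>0 * (1 + z0\<^sup>2) / (1 + (b1 - 1) * z0\<^sup>2))) (at z0)"
    using YF_deriv[OF b] .
  have single: "H \<inter> charPlane = {(z0,\<tau>0,0)}" if "\<not> (\<exists>z. z \<noteq> z0 \<and> D*z = N)"
  proof -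
    have "q \<in> H \<inter> charPlane \<longleftrightarrow> q = (z0,\<tau>0,0)" for q
      unfolding HC using that Tz0 by auto
    then show ?thesis by auto
  qed
  have case0: "H \<inter> charPlane = {(z0,\<tau>0,0)}" if "\<tau>0 = 0"
    by (rule single) (use that in \<open>simp add: D_def N_def\<close>)
  have caseD0: "H \<inter> charPlane = {(z0,\<tau>0,0)}" if "D = 0"
  proof (rule single)
    have "N \<noteq> 0"
    proof
      assume "N = 0"
      then have "\<tau>0*(1+z0\<^sup>2) = z0" unfolding N_def by simp
      then have "D = z0*z0 + 1" unfolding D_def by (metis mult.commute mult.left_commute add.commute)
      then show False using that by (smt (verit) zero_le_square)
    qed
    then show "\<not> (\<exists>z. z \<noteq> z0 \<and> D*z = N)" using that by auto
  qed
  have z1ne: "N/D \<noteq> z0" if "\<tau>0 \<noteq> 0" "D \<noteq> 0"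
  proof
    assume "N/D = z0"
    then have "N = D*z0" using that by (simp add: field_simps)
    then have "\<tau>0*(1+z0\<^sup>2)*(1+z0\<^sup>2) = 0" unfolding N_def D_def by (simp add: algebra_simps power2_eq_square)
    then show False using that p by simp
  qed
  have caseT: "H \<inter> charPlane = {(z0,\<tau>0,0), (N/D, TF b1 z0 \<tau>0 (N/D), 0)}" if "D \<noteq> 0"
  proof -
    have "q \<in> H \<inter> charPlane \<longleftrightarrow> q = (z0,\<tau>0,0) \<or> q = (N/D, TF b1 z0 \<tau>0 (N/D), 0)" for q
      unfolding HC using that Tz0 by (auto simp: field_simps)
    then show ?thesis by auto
  qed
  have part1: "(H \<inter> charPlane = {(z0,\<tau>0,0)} \<and> D \<noteq> 0) \<longleftrightarrow> \<tau>0 = 0"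
  proof
    assume A: "H \<inter> charPlane = {(z0,\<tau>0,0)} \<and> D \<noteq> 0"
    show "\<tau>0 = 0"
    proof (rule ccontr)
      assume "\<tau>0 \<noteq> 0"
      then show False using caseT[of] A z1ne by (metis doubleton_eq_iff insert_absorb2 prod.inject)
    qed
  next
    assume "\<tau>0 = 0"
    then show "H \<inter> charPlane = {(z0,\<tau>0,0)} \<and> D \<noteq> 0" using case0 by (simp add: D_def)
  qed
  have coinc: "(z0, \<tau>0, 0::real) \<in> coincCurve \<longleftrightarrow> \<tau>0 = 0" unfolding coincCurve_def by simp
  have derT0: "\<tau>0 = 0 \<Longrightarrow> (YF (a3-a2) b1 z0 \<tau>0 has_real_derivative 0) (at z0)"
    using der by simp
  have z1eq: "- (\<tau>0 * (1 + z0\<^sup>2) - z0) / (\<tau>0 * z0 * (1 + z0\<^sup>2) + 1) = N/D"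
    unfolding N_def D_def ..
  have P4a: "\<tau>0 \<noteq> 0 \<Longrightarrow> D \<noteq> 0 \<Longrightarrow> (\<exists>\<tau>1. H \<inter> charPlane = {(z0, \<tau>0, 0), (N/D, \<tau>1, 0)} \<and> N/D \<noteq> z0)"
    using caseT z1ne by blast
  show ?thesis
    unfolding z1eq H_def[symmetric] D_def[symmetric] coinc
    apply (intro conjI impI)
    subgoal by (rule part1)
    subgoal by (rule refl)
    subgoal using case0 by simp
    subgoal using Hr derT0 by blast
    subgoal using P4a by (simp add: N_def)
    subgoal using caseD0 by simp
    subgoal using Hr der by blast
    done
qed

end
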